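(* Let $W\in\{0,1\}^{n\times n}$ be a random adjacency matrix from a latent space model with population matrix $\mathscr{W}=\mathbb{E}(W)$, and let $L$ and $\mathscr{L}$ be the observed and population normalized graph Laplacians. Let $c_i=\mathscr{D}_{ii}/n$ and $\tau=\min_{i=1,\dots,n}c_i$. If $n^{1/2}/\log n>2$, then \[ \mathbb{P}\Bigl(\|LL-\mathscr{L}\mathscr{L}\|_F\ge\frac{32\sqrt2\,\log n}{\tau^2n^{1/2}}\Bigr)\le4n^{2-2\tau^2\log n}. \]
   Context: Latent space model (latent vectors treated as fixed): $W$ is a symmetric $\{0,1\}$-valued $n\times n$ matrix with $W_{ii}=0$, and the entries $W_{ij}$, $i<j$, are independent Bernoulli with means $\mathscr{W}_{ij}\in[0,1]$; $\mathscr{W}=\mathbb{E}(W)$. $D$ is diagonal with $D_{ii}=\sum_kW_{ik}$, $L=D^{-1/2}WD^{-1/2}$; $\mathscr{D}$ is diagonal with $\mathscr{D}_{ii}=\sum_k\mathscr{W}_{ik}$, $\mathscr{L}=\mathscr{D}^{-1/2}\mathscr{W}\mathscr{D}^{-1/2}$. $\|\cdot\|_F$ is the Frobenius norm. *)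

theory Defs
  imports "HOL-Probability.Probability"
begin

text \<open>n x n real matrices are represented as functions nat => nat => real,
  only the entries with indices below n being relevant.\<close>

definition upper_pairs :: "nat \<Rightarrow> (nat \<times> nat) set" where
  "upper_pairs n = {(i, j). i < j \<and> j < n}"

text \<open>Distribution of the independent upper-triangular entries W_ij (i<j),
  W_ij ~ Bernoulli(P i j).  Outcomes are functions on pairs (i,j), i<j.\<close>
definition edge_pmf :: "nat \<Rightarrow> (nat \<Rightarrow> nat \<Rightarrow> real) \<Rightarrow> ((nat \<times> nat) \<Rightarrow> bool) pmf" where
  "edge_pmf n P = Pi_pmf (upper_pairs n) False (\<lambda>(i, j). bernoulli_pmf (P i j))"

definition adj :: "((nat \<times> nat) \<Rightarrow> bool) \<Rightarrow> nat \<Rightarrow> nat \<Rightarrow> real" where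
  "adj \<omega> i j = (if i = j then 0 else (if \<omega> (min i j, max i j) then 1 else 0))"

definition pop :: "(nat \<Rightarrow> nat \<Rightarrow> real) \<Rightarrow> nat \<Rightarrow> nat \<Rightarrow> real" where
  "pop P i j = (if i = j then 0 else P (min i j) (max i j))"

definition degree :: "nat \<Rightarrow> (nat \<Rightarrow> nat \<Rightarrow> real) \<Rightarrow> nat \<Rightarrow> real" where
  "degree n A i = (\<Sum>k<n. A i k)"

definition norm_lap :: "nat \<Rightarrow> (nat \<Rightarrow> nat \<Rightarrow> real) \<Rightarrow> nat \<Rightarrow> nat \<Rightarrow> real" where
  "norm_lap n A i j = A i j / (sqrt (degree n A i) * sqrt (degree n A j))"

definition mat_mult :: "nat \<Rightarrow> (nat \<Rightarrow> nat \<Rightarrow> real) \<Rightarrow> (nat \<Rightarrow> nat \<Rightarrow> real) \<Rightarrow> nat \<Rightarrow> nat \<Rightarrow> real" where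
  "mat_mult n A B i j = (\<Sum>k<n. A i k * B k j)"

definition frob_norm :: "nat \<Rightarrow> (nat \<Rightarrow> nat \<Rightarrow> real) \<Rightarrow> real" where
  "frob_norm n A = sqrt (\<Sum>i<n. \<Sum>j<n. (A i j)\<^sup>2)"

end

theory Submission
  imports Defs
begin


definition edge :: "nat \<Rightarrow> nat \<Rightarrow> nat \<times> nat" where
  "edge a b = (min a b, max a b)"
definition Kset :: "nat \<Rightarrow> nat \<Rightarrow> nat \<Rightarrow> (nat \<times> nat) set" where
  "Kset i j k = {edge i k, edge k j}"
definition Sset :: "nat \<Rightarrow> nat \<Rightarrow> nat \<Rightarrow> nat set" where
  "Sset n i j = {k. k < n \<and> k \<noteq> i \<and> k \<noteq> j}"

lemma finite_upper_pairs: "finite (upper_pairs n)"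
proof -
  have "upper_pairs n \<subseteq> {..<n} \<times> {..<n}" by (auto simp: upper_pairs_def)
  then show ?thesis by (rule finite_subset) auto
qed

lemma edge_in: "a < n \<Longrightarrow> b < n \<Longrightarrow> a \<noteq> b \<Longrightarrow> edge a b \<in> upper_pairs n"
  by (auto simp: edge_def upper_pairs_def min_def max_def)

lemma edge_eq_iff: "edge a b = edge c d \<longleftrightarrow> (a = c \<and> b = d) \<or> (a = d \<and> b = c)"
  by (auto simp: edge_def min_def max_def split: if_splits)

lemma edge_sym: "edge a b = edge b a"
  by (auto simp: edge_def)

lemma Kset_sub: "k \<in> Sset n i j \<Longrightarrow> i < n \<Longrightarrow> j < n \<Longrightarrow> Kset i j k \<subseteq> upper_pairs n"
  by (auto simp: Kset_def Sset_def intro!: edge_in)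

lemma Kset_disj: "disjoint_family_on (Kset i j) (Sset n i j)"
  unfolding disjoint_family_on_def Kset_def Sset_def
  by (auto simp: edge_eq_iff)

lemma expect_K:
  assumes P_range: "\<And>i j. i < j \<Longrightarrow> j < n \<Longrightarrow> 0 \<le> P i j \<and> P i j \<le> 1"
    and K: "K \<subseteq> upper_pairs n"
  shows "measure_pmf.expectation (edge_pmf n P) (\<lambda>\<omega>. \<Prod>e\<in>K. of_bool (\<omega> e))
         = (\<Prod>e\<in>K. P (fst e) (snd e))"
proof -
  let ?A = "upper_pairs n"
  have fin: "finite ?A" by (rule finite_upper_pairs)
  have finK: "finite K" using K fin finite_subset by blast
  define f where "f = (\<lambda>e (b::bool). if e \<in> K then (of_bool b :: real) else 1)"
  have eq: "(\<lambda>\<omega>. \<Prod>e\<in>K. of_bool (\<omega> e)) = (\<lambda>\<omega>. \<Prod>e\<in>?A. f e (\<omega> e))"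
  proof
    fix \<omega> :: "nat \<times> nat \<Rightarrow> bool"
    have "(\<Prod>e\<in>?A. f e (\<omega> e)) = (\<Prod>e\<in>K. f e (\<omega> e))"
      by (rule prod.mono_neutral_right[OF fin K]) (auto simp: f_def)
    also have "\<dots> = (\<Prod>e\<in>K. of_bool (\<omega> e))" by (simp add: f_def)
    finally show "(\<Prod>e\<in>K. (of_bool (\<omega> e)::real)) = (\<Prod>e\<in>?A. f e (\<omega> e))" by simp
  qed
  have pr: "0 \<le> P (fst e) (snd e) \<and> P (fst e) (snd e) \<le> 1" if "e \<in> ?A" for e
    using that P_range by (auto simp: upper_pairs_def)
  have "measure_pmf.expectation (edge_pmf n P) (\<lambda>\<omega>. \<Prod>e\<in>?A. f e (\<omega> e))
        = (\<Prod>e\<in>?A. measure_pmf.expectation ((\<lambda>(i, j). bernoulli_pmf (P i j)) e) (\<lambda>v. f e v))"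
    unfolding edge_pmf_def
    by (rule expectation_prod_Pi_pmf[OF fin]) (auto simp: f_def integrable_measure_pmf_finite)
  also have "\<dots> = (\<Prod>e\<in>?A. if e \<in> K then P (fst e) (snd e) else 1)"
    by (intro prod.cong refl) (use pr in \<open>auto simp: f_def split: prod.splits\<close>)
  also have "\<dots> = (\<Prod>e\<in>K. P (fst e) (snd e))"
    using K by (simp add: prod.If_cases[OF fin] Int_absorb1)
  finally show ?thesis using eq by simp
qed

lemma hoeff:
  assumes P_range: "\<And>i j. i < j \<Longrightarrow> j < n \<Longrightarrow> 0 \<le> P i j \<and> P i j \<le> 1"
    and ij: "i < n" "j < n"
    and c: "\<And>k. 0 \<le> c k \<and> c k \<le> C" and C: "C > 0" and t: "t > 0"
  shows "measure_pmf.prob (edge_pmf n P)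
     {\<omega>. \<bar>(\<Sum>k\<in>Sset n i j. c k * (\<Prod>e\<in>Kset i j k. of_bool (\<omega> e)))
          - (\<Sum>k\<in>Sset n i j. c k * (\<Prod>e\<in>Kset i j k. P (fst e) (snd e)))\<bar> \<ge> t}
     \<le> 2 * exp (-2 * t\<^sup>2 / (real n * C\<^sup>2))"
proof -
  let ?M = "measure_pmf (edge_pmf n P)"
  let ?S = "Sset n i j"
  let ?A = "upper_pairs n"
  define X where "X = (\<lambda>k (\<omega>::nat\<times>nat\<Rightarrow>bool). c k * (\<Prod>e\<in>Kset i j k. (of_bool (\<omega> e)::real)))"
  have finS: "finite ?S" by (auto simp: Sset_def)
  have cardS: "card ?S \<le> n"
  proof -
    have "card ?S \<le> card {..<n}" by (rule card_mono) (auto simp: Sset_def)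
    then show ?thesis by simp
  qed
  show ?thesis
  proof (cases "?S = {}")
    case True
    then show ?thesis using t by simp
  next
    case False
    have cpos: "card ?S > 0" using False finS by (simp add: card_gt_0_iff)
    have ind0: "prob_space.indep_vars ?M (\<lambda>_. count_space UNIV) (\<lambda>x f. f x) ?A"
      unfolding edge_pmf_def by (rule indep_vars_Pi_pmf[OF finite_upper_pairs])
    have ind1: "prob_space.indep_vars ?M (\<lambda>k. PiM (Kset i j k) (\<lambda>_. count_space UNIV))
                  (\<lambda>k \<omega>. restrict (\<lambda>e. \<omega> e) (Kset i j k)) ?S"
      by (rule prob_space.indep_vars_restrict[OF measure_pmf.prob_space_axioms, OF ind0 Kset_sub[OF _ ij] Kset_disj])
    have ind2: "prob_space.indep_vars ?M (\<lambda>_. borel)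
       (\<lambda>k \<omega>. (\<lambda>h. c k * (\<Prod>e\<in>Kset i j k. (of_bool (h e)::real))) (restrict (\<lambda>e. \<omega> e) (Kset i j k))) ?S"
    proof (rule prob_space.indep_vars_compose2[OF measure_pmf.prob_space_axioms, OF ind1])
      fix k assume "k \<in> ?S"
      show "(\<lambda>h. c k * (\<Prod>e\<in>Kset i j k. (of_bool (h e)::real))) \<in> borel_measurable (PiM (Kset i j k) (\<lambda>_. count_space UNIV))"
        by measurable
    qed
    have ind: "prob_space.indep_vars ?M (\<lambda>_. borel) X ?S"
      using ind2 by (rule prob_space.indep_vars_cong[OF measure_pmf.prob_space_axioms, THEN iffD1, rotated -1]) (auto simp: X_def fun_eq_iff)
    interpret H: Hoeffding_ineq ?M ?S X "\<lambda>_. 0" "\<lambda>_. C" "\<Sum>k\<in>?S. measure_pmf.expectation (edge_pmf n P) (X k)"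
    proof unfold_locales
      show "finite ?S" by (rule finS)
      show "prob_space.indep_vars ?M (\<lambda>_. borel) X ?S" by (rule ind)
      fix k assume "k \<in> ?S"
      show "AE x in ?M. X k x \<in> {0..C}"
      proof (rule AE_I2)
        fix x
        have "(\<Prod>e\<in>Kset i j k. (of_bool (x e)::real)) \<in> {0..1}"
          by (auto intro!: prod_nonneg prod_le_1)
        then show "X k x \<in> {0..C}" using c[of k]
          by (auto simp: X_def intro: mult_nonneg_nonneg order.trans[OF mult_right_le_one_le])
      qed
    qed simp
    have mu: "(\<Sum>k\<in>?S. measure_pmf.expectation (edge_pmf n P) (X k)) = (\<Sum>k\<in>?S. c k * (\<Prod>e\<in>Kset i j k. P (fst e) (snd e)))"
    proof (intro sum.cong refl)
      fix k assume k: "k \<in> ?S"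
      have "measure_pmf.expectation (edge_pmf n P) (X k) = c k * measure_pmf.expectation (edge_pmf n P) (\<lambda>\<omega>. \<Prod>e\<in>Kset i j k. (of_bool (\<omega> e)::real))"
        by (simp add: X_def)
      also have "\<dots> = c k * (\<Prod>e\<in>Kset i j k. P (fst e) (snd e))"
        by (simp add: expect_K[OF P_range Kset_sub[OF k ij]])
      finally show "measure_pmf.expectation (edge_pmf n P) (X k) = c k * (\<Prod>e\<in>Kset i j k. P (fst e) (snd e))" .
    qed
    have sumpos: "(\<Sum>k\<in>?S. (C - 0)\<^sup>2) > 0" using cpos C by simp
    have "measure_pmf.prob (edge_pmf n P) {x \<in> space ?M. \<bar>(\<Sum>k\<in>?S. X k x) - (\<Sum>k\<in>?S. measure_pmf.expectation (edge_pmf n P) (X k))\<bar> \<ge> t}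
          \<le> 2 * exp (-2 * t\<^sup>2 / (\<Sum>k\<in>?S. (C - 0)\<^sup>2))"
      by (rule H.Hoeffding_ineq_abs_ge) (use t sumpos in auto)
    also have "\<dots> \<le> 2 * exp (-2 * t\<^sup>2 / (real n * C\<^sup>2))"
    proof -
      have "(\<Sum>k\<in>?S. (C - 0)\<^sup>2) = real (card ?S) * C\<^sup>2" by simp
      moreover have "real (card ?S) * C\<^sup>2 \<le> real n * C\<^sup>2"
        using cardS by (intro mult_right_mono) auto
      moreover have "real (card ?S) * C\<^sup>2 > 0" using cpos C by simp
      ultimately have "2 * t\<^sup>2 / (real n * C\<^sup>2) \<le> 2 * t\<^sup>2 / (\<Sum>k\<in>?S. (C - 0)\<^sup>2)"
        by (intro divide_left_mono) auto
      then have "-2 * t\<^sup>2 / (\<Sum>k\<in>?S. (C - 0)\<^sup>2) \<le> -2 * t\<^sup>2 / (real n * C\<^sup>2)"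
        by simp
      then show ?thesis by simp
    qed
    finally have fin: "measure_pmf.prob (edge_pmf n P) {x \<in> space ?M. \<bar>(\<Sum>k\<in>?S. X k x) - (\<Sum>k\<in>?S. measure_pmf.expectation (edge_pmf n P) (X k))\<bar> \<ge> t}
          \<le> 2 * exp (-2 * t\<^sup>2 / (real n * C\<^sup>2))" .
    show ?thesis using fin unfolding mu by (simp add: X_def)
  qed
qed



lemma LL_formula:
  assumes "\<And>k. k < n \<Longrightarrow> degree n A k \<ge> 0"
  shows "mat_mult n (norm_lap n A) (norm_lap n A) i j
       = (\<Sum>k<n. A i k * A k j / degree n A k) / (sqrt (degree n A i) * sqrt (degree n A j))"
  unfolding mat_mult_def norm_lap_def sum_divide_distrib
proof (intro sum.cong refl)
  fix k assume "k \<in> {..<n}"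
  then have dk: "sqrt (degree n A k) * sqrt (degree n A k) = degree n A k"
    using assms by simp
  show "A i k / (sqrt (degree n A i) * sqrt (degree n A k)) * (A k j / (sqrt (degree n A k) * sqrt (degree n A j)))
     = A i k * A k j / degree n A k / (sqrt (degree n A i) * sqrt (degree n A j))"
  proof -
    have "A i k / (sqrt (degree n A i) * sqrt (degree n A k)) * (A k j / (sqrt (degree n A k) * sqrt (degree n A j)))
      = A i k * A k j / (sqrt (degree n A k) * sqrt (degree n A k)) / (sqrt (degree n A i) * sqrt (degree n A j))"
      by (simp only: times_divide_times_eq divide_divide_eq_left mult_ac)
    then show ?thesis by (simp only: dk)
  qed
qed

lemma entry_bound:
  fixes n :: nat and \<tau> \<epsilon> \<beta> :: real and w p r d D :: "nat \<Rightarrow> real"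
  assumes tau: "\<tau> > 0" "\<tau> \<le> 1" and eps: "\<epsilon> > 0" "\<epsilon> \<le> 1/2" and n: "n > 0" and beta: "\<beta> \<ge> 0"
    and w: "\<And>k. k < n \<Longrightarrow> 0 \<le> w k \<and> w k \<le> 1"
    and p: "\<And>k. k < n \<Longrightarrow> 0 \<le> p k \<and> p k \<le> 1"
    and D: "\<And>k. k < n \<Longrightarrow> \<tau> * n \<le> D k"
    and dD: "\<And>k. k < n \<Longrightarrow> \<bar>d k - D k\<bar> \<le> \<tau> * n * \<epsilon>"
    and ij: "i < n" "j < n"
    and h1: "\<bar>(\<Sum>k<n. w k / D k) - (\<Sum>k<n. r k / D k)\<bar> \<le> \<epsilon>"
    and h2: "\<bar>(\<Sum>k<n. r k / D k) - (\<Sum>k<n. p k / D k)\<bar> \<le> \<beta>"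
  shows "\<bar>(\<Sum>k<n. w k / d k) / (sqrt (d i) * sqrt (d j)) - (\<Sum>k<n. p k / D k) / (sqrt (D i) * sqrt (D j))\<bar>
         \<le> (8 * \<epsilon> / \<tau> + 2 * \<beta>) / (\<tau> * n)"
proof -
  define N where "N = \<tau> * real n"
  have N: "N > 0" using tau n by (simp add: N_def)
  have D': "\<And>k. k < n \<Longrightarrow> N \<le> D k" using D by (simp add: N_def)
  have dD': "\<And>k. k < n \<Longrightarrow> \<bar>d k - D k\<bar> \<le> N * \<epsilon>" using dD by (simp add: N_def)
  have dlow: "d k \<ge> N / 2" if "k < n" for k
  proof -
    have "N * \<epsilon> \<le> N / 2" using N eps by (simp add: mult_left_mono[of \<epsilon> "1/2" N, simplified])
    then show ?thesis using D'[OF that] dD'[OF that] by linarith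
  qed
  have dlo: "d k \<ge> (1 - \<epsilon>) * D k" if "k < n" for k
  proof -
    have "N * \<epsilon> \<le> D k * \<epsilon>" using D'[OF that] eps by (simp add: mult_right_mono)
    then show ?thesis using dD'[OF that] by (simp add: algebra_simps)
  qed
  have dhi: "d k \<le> (1 + \<epsilon>) * D k" if "k < n" for k
  proof -
    have "N * \<epsilon> \<le> D k * \<epsilon>" using D'[OF that] eps by (simp add: mult_right_mono)
    then show ?thesis using dD'[OF that] by (simp add: algebra_simps)
  qed
  define a where "a = (\<Sum>k<n. w k / d k)"
  define b where "b = (\<Sum>k<n. w k / D k)"
  define B where "B = (\<Sum>k<n. r k / D k)"
  define A where "A = (\<Sum>k<n. p k / D k)"
  have tm: "\<bar>w k / d k - w k / D k\<bar> \<le> 2 * \<epsilon> / N" if k: "k < n" for k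
  proof -
    have dpos: "d k > 0" using dlow[OF k] N by linarith
    have Dpos: "D k > 0" using D'[OF k] N by linarith
    have "w k / d k - w k / D k = w k * (D k - d k) / (d k * D k)"
      using dpos Dpos by (simp add: field_simps)
    then have "\<bar>w k / d k - w k / D k\<bar> = w k * \<bar>D k - d k\<bar> / (d k * D k)"
      using dpos Dpos w[OF k] by (simp add: abs_mult abs_div)
    also have "\<dots> \<le> 1 * (N * \<epsilon>) / ((N/2) * N)"
    proof (rule frac_le)
      show "0 \<le> 1 * (N * \<epsilon>)" using N eps by simp
      show "w k * \<bar>D k - d k\<bar> \<le> 1 * (N * \<epsilon>)"
        using w[OF k] dD'[OF k] by (intro mult_mono) auto
      show "0 < N / 2 * N" using N by simp
      show "N / 2 * N \<le> d k * D k" using dlow[OF k] D'[OF k] N by (intro mult_mono) auto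
    qed
    also have "\<dots> = 2 * \<epsilon> / N" using N by (simp add: field_simps power2_eq_square)
    finally show ?thesis .
  qed
  have s2: "\<bar>a - b\<bar> \<le> 2 * \<epsilon> / \<tau>"
  proof -
    have "\<bar>a - b\<bar> = \<bar>\<Sum>k<n. w k / d k - w k / D k\<bar>" by (simp add: a_def b_def sum_subtractf)
    also have "\<dots> \<le> (\<Sum>k<n. \<bar>w k / d k - w k / D k\<bar>)" by (rule sum_abs)
    also have "\<dots> \<le> (\<Sum>k<n. 2 * \<epsilon> / N)" by (intro sum_mono tm) auto
    also have "\<dots> = 2 * \<epsilon> / \<tau>" using n tau by (simp add: N_def)
    finally show ?thesis .
  qed
  have A0: "A \<ge> 0" unfolding A_def
    using p D' N by (intro sum_nonneg divide_nonneg_nonneg) (auto intro: order.trans[OF less_imp_le[OF N]])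
  have A1: "A \<le> 1 / \<tau>"
  proof -
    have "A \<le> (\<Sum>k<n. 1 / N)" unfolding A_def
    proof (intro sum_mono)
      fix k assume "k \<in> {..<n}"
      then have k: "k < n" by simp
      show "p k / D k \<le> 1 / N" using p[OF k] D'[OF k] N by (intro frac_le) auto
    qed
    also have "\<dots> = 1 / \<tau>" using n tau by (simp add: N_def)
    finally show ?thesis .
  qed
  define s where "s = sqrt (d i) * sqrt (d j)"
  define S where "S = sqrt (D i) * sqrt (D j)"
  have Di: "D i \<ge> N" "D j \<ge> N" using D' ij by auto
  have di: "d i \<ge> 0" "d j \<ge> 0" using dlow ij N by (auto intro: order.trans[of 0 "N/2"])
  have s_eq: "s = sqrt (d i * d j)" by (simp add: s_def real_sqrt_mult)
  have S_eq: "S = sqrt (D i * D j)" by (simp add: S_def real_sqrt_mult)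
  have SN: "S \<ge> N"
  proof -
    have "N * N \<le> D i * D j" using Di N by (intro mult_mono) auto
    then have "sqrt (N * N) \<le> sqrt (D i * D j)" by (rule real_sqrt_le_mono)
    then show ?thesis using N by (simp add: S_eq)
  qed
  have slo: "s \<ge> (1 - \<epsilon>) * S"
  proof -
    have "((1 - \<epsilon>) * D i) * ((1 - \<epsilon>) * D j) \<le> d i * d j"
      using dlo ij Di N eps di by (intro mult_mono) (auto intro: mult_nonneg_nonneg)
    then have "sqrt (((1 - \<epsilon>) * S)\<^sup>2) \<le> s"
      unfolding s_eq S_eq using eps Di N
      by (simp add: power_mult_distrib real_sqrt_le_mono mult_ac power2_eq_square)
    then show ?thesis using eps SN N by simp
  qed
  have shi: "s \<le> (1 + \<epsilon>) * S"
  proof -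
    have "d i * d j \<le> ((1 + \<epsilon>) * D i) * ((1 + \<epsilon>) * D j)"
      using dhi ij di Di N eps by (intro mult_mono) auto
    then have "s \<le> sqrt (((1 + \<epsilon>) * S)\<^sup>2)"
      unfolding s_eq S_eq using eps Di N
      by (simp add: power_mult_distrib real_sqrt_le_mono mult_ac power2_eq_square)
    then show ?thesis using eps SN N by simp
  qed
  have sN: "s \<ge> N / 2"
  proof -
    have "(1 - \<epsilon>) * S \<ge> (1/2) * N" using eps SN N by (intro mult_mono) auto
    then show ?thesis using slo by simp
  qed
  have spos: "s > 0" using sN N by linarith
  have Spos: "S > 0" using SN N by linarith
  have s5: "\<bar>1 / s - 1 / S\<bar> \<le> 2 * \<epsilon> / N"
  proof -
    have "\<bar>1 / s - 1 / S\<bar> = \<bar>S - s\<bar> / (s * S)" using spos Spos by (simp add: field_simps abs_div)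
    also have "\<dots> \<le> (\<epsilon> * S) / (s * S)"
      using slo shi spos Spos by (intro divide_right_mono) (auto simp: algebra_simps)
    also have "\<dots> = \<epsilon> / s" using Spos by simp
    also have "\<dots> \<le> \<epsilon> / (N / 2)" using sN N eps by (intro divide_left_mono) auto
    also have "\<dots> = 2 * \<epsilon> / N" by simp
    finally show ?thesis .
  qed
  have aA: "\<bar>a - A\<bar> \<le> 2 * \<epsilon> / \<tau> + \<epsilon> + \<beta>"
    using s2 h1 h2 unfolding b_def[symmetric] B_def[symmetric] A_def[symmetric] by linarith
  have "\<bar>a / s - A / S\<bar> = \<bar>(a - A) / s + A * (1 / s - 1 / S)\<bar>"
    using spos Spos by (simp add: field_simps)
  also have "\<dots> \<le> \<bar>a - A\<bar> / s + A * \<bar>1 / s - 1 / S\<bar>"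
    by (rule order.trans[OF abs_triangle_ineq]) (use spos A0 in \<open>simp add: abs_mult abs_div\<close>)
  also have "\<dots> \<le> (2 * \<epsilon> / \<tau> + \<epsilon> + \<beta>) / (N / 2) + (1 / \<tau>) * (2 * \<epsilon> / N)"
  proof (rule add_mono)
    show "\<bar>a - A\<bar> / s \<le> (2 * \<epsilon> / \<tau> + \<epsilon> + \<beta>) / (N / 2)"
      using aA sN N by (intro frac_le) auto
    show "A * \<bar>1 / s - 1 / S\<bar> \<le> (1 / \<tau>) * (2 * \<epsilon> / N)"
      using A0 A1 s5 tau by (intro mult_mono) auto
  qed
  also have "\<dots> = (4 * \<epsilon> / \<tau> + 2 * \<epsilon> + 2 * \<beta> + 2 * \<epsilon> / \<tau>) / N"
    using N tau by (simp add: field_simps)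
  also have "\<dots> \<le> (8 * \<epsilon> / \<tau> + 2 * \<beta>) / N"
  proof (rule divide_right_mono)
    have "\<epsilon> \<le> \<epsilon> / \<tau>" using tau eps by (simp add: le_divide_eq)
    then show "4 * \<epsilon> / \<tau> + 2 * \<epsilon> + 2 * \<beta> + 2 * \<epsilon> / \<tau> \<le> 8 * \<epsilon> / \<tau> + 2 * \<beta>" by linarith
  qed (use N in auto)
  finally show ?thesis by (simp add: a_def A_def s_def S_def N_def)
qed



lemma prodK_adj:
  assumes "k \<noteq> i" "k \<noteq> j"
  shows "(\<Prod>e\<in>Kset i j k. (of_bool (\<omega> e)::real)) = adj \<omega> i k * adj \<omega> k j"
proof (cases "i = j")
  case True
  then show ?thesis using assms
    by (auto simp: Kset_def adj_def edge_def min_def max_def)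
next
  case False
  then have "edge i k \<noteq> edge k j" using assms by (auto simp: edge_eq_iff)
  then show ?thesis using assms
    by (auto simp: Kset_def adj_def edge_def min_def max_def)
qed

lemma prodK_pop:
  assumes "k \<noteq> i" "k \<noteq> j"
  shows "(\<Prod>e\<in>Kset i j k. P (fst e) (snd e)) = (if i = j then pop P i k else pop P i k * pop P k j)"
proof (cases "i = j")
  case True
  then show ?thesis using assms
    by (auto simp: Kset_def pop_def edge_def min_def max_def)
next
  case False
  then have "edge i k \<noteq> edge k j" using assms by (auto simp: edge_eq_iff)
  then show ?thesis using assms False
    by (auto simp: Kset_def pop_def edge_def min_def max_def)
qed

lemma sum_Sset:
  assumes "i < n" "j < n" "f i = 0" "f j = 0"
  shows "(\<Sum>k<n. f k) = (\<Sum>k\<in>Sset n i j. f k)"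
  by (rule sum.mono_neutral_right) (use assms in \<open>auto simp: Sset_def\<close>)

lemma ln_ge_half: "n \<ge> 2 \<Longrightarrow> ln (real n) \<ge> 1/2"
proof -
  assume n: "n \<ge> 2"
  have "ln (1/2::real) \<le> 1/2 - 1" by (rule ln_le_minus_one) simp
  then have "ln (2::real) \<ge> 1/2" by (simp add: ln_div)
  moreover have "ln (2::real) \<le> ln (real n)" using n by simp
  ultimately show ?thesis by linarith
qed

lemma diag_bias:
  fixes q D :: "nat \<Rightarrow> real"
  assumes tau: "\<tau> > 0" and n: "n > 0" and q: "\<And>k. k < n \<Longrightarrow> 0 \<le> q k \<and> q k \<le> 1"
    and D: "\<And>k. k < n \<Longrightarrow> \<tau> * n \<le> D k"
  shows "\<bar>(\<Sum>k<n. q k / D k) - (\<Sum>k<n. q k * q k / D k)\<bar> \<le> 1 / \<tau>"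
proof -
  have Dpos: "D k > 0" if "k < n" for k
    using D[OF that] tau n by (meson mult_pos_pos of_nat_0_less_iff order_less_le_trans)
  have eq: "(\<Sum>k<n. q k / D k) - (\<Sum>k<n. q k * q k / D k) = (\<Sum>k<n. (q k - q k * q k) / D k)"
    by (simp add: sum_subtractf diff_divide_distrib)
  have t0: "0 \<le> (q k - q k * q k) / D k" if "k \<in> {..<n}" for k
    using q[of k] Dpos[of k] that by (auto intro!: divide_nonneg_pos simp: mult_left_le)
  have t1: "(q k - q k * q k) / D k \<le> 1 / (\<tau> * n)" if "k \<in> {..<n}" for k
  proof (rule frac_le)
    have "0 \<le> q k * q k" by simp
    moreover have "k < n" using that by simp
    ultimately show "q k - q k * q k \<le> 1" using q[of k] by linarith
  qed (use D[of k] tau n that in auto)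
  have "0 \<le> (\<Sum>k<n. (q k - q k * q k) / D k)" by (rule sum_nonneg) (rule t0)
  moreover have "(\<Sum>k<n. (q k - q k * q k) / D k) \<le> (\<Sum>k<n. 1 / (\<tau> * n))" by (rule sum_mono) (rule t1)
  moreover have "(\<Sum>k<n. 1 / (\<tau> * real n)) = 1 / \<tau>" using n by simp
  ultimately show ?thesis unfolding eq by simp
qed

lemma frob_bound:
  fixes E :: "nat \<Rightarrow> nat \<Rightarrow> real"
  assumes tau: "\<tau> > 0" and n: "n > 0" and eps: "\<epsilon> > 0" and ln: "ln (real n) \<ge> 1/2"
    and eps2: "\<epsilon>\<^sup>2 * real n = (ln (real n))\<^sup>2"
    and E: "\<And>i j. i < n \<Longrightarrow> j < n \<Longrightarrow>
        (E i j)\<^sup>2 \<le> 128 * \<epsilon>\<^sup>2 / (\<tau>^4 * (real n)\<^sup>2) + (if i = j then 8 / (\<tau>^4 * (real n)\<^sup>2) else 0)"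
  shows "frob_norm n E < 32 * sqrt 2 * \<epsilon> / \<tau>\<^sup>2"
proof -
  define a where "a = 128 * \<epsilon>\<^sup>2 / (\<tau>^4 * (real n)\<^sup>2)"
  define b where "b = 8 / (\<tau>^4 * (real n)\<^sup>2)"
  have "(\<Sum>i<n. \<Sum>j<n. (E i j)\<^sup>2) \<le> (\<Sum>i<n. \<Sum>j<n. a + (if i = j then b else 0))"
  proof (intro sum_mono)
    fix i j assume "i \<in> {..<n}" "j \<in> {..<n}"
    then show "(E i j)\<^sup>2 \<le> a + (if i = j then b else 0)" unfolding a_def b_def by (intro E) auto
  qed
  also have "\<dots> = (\<Sum>i<n. real n * a + b)"
    by (intro sum.cong refl) (simp add: sum.distrib)
  also have "\<dots> = real n * (real n * a + b)" by simp
  also have "\<dots> = 128 * \<epsilon>\<^sup>2 / \<tau>^4 + 8 / (\<tau>^4 * real n)"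
    using n tau by (simp add: a_def b_def field_simps power2_eq_square)
  also have "\<dots> < 2048 * \<epsilon>\<^sup>2 / \<tau>^4"
  proof -
    have "ln (real n) * ln (real n) \<ge> (1/2) * (1/2)" using ln by (intro mult_mono) auto
    then have "(ln (real n))\<^sup>2 \<ge> 1/4" by (simp add: power2_eq_square)
    then have "8 < 1920 * (\<epsilon>\<^sup>2 * real n)" unfolding eps2 by linarith
    then have "8 / real n < 1920 * \<epsilon>\<^sup>2" using n by (simp add: field_simps)
    then have "8 / real n / \<tau>^4 < 1920 * \<epsilon>\<^sup>2 / \<tau>^4" using tau by (intro divide_strict_right_mono) auto
    moreover have "8 / real n / \<tau>^4 = 8 / (\<tau>^4 * real n)" by (simp add: mult.commute)
    moreover have "2048 * \<epsilon>\<^sup>2 / \<tau>^4 = 1920 * \<epsilon>\<^sup>2 / \<tau>^4 + 128 * \<epsilon>\<^sup>2 / \<tau>^4"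
      by (simp add: add_divide_distrib[symmetric])
    ultimately show ?thesis by linarith
  qed
  finally have lt: "(\<Sum>i<n. \<Sum>j<n. (E i j)\<^sup>2) < (32 * sqrt 2 * \<epsilon> / \<tau>\<^sup>2)\<^sup>2"
    by (simp add: power_mult_distrib power_divide power2_eq_square[of "sqrt 2"] field_simps)
  have pos: "32 * sqrt 2 * \<epsilon> / \<tau>\<^sup>2 > 0" using eps tau by simp
  show ?thesis unfolding frob_norm_def
    using lt pos by (simp add: real_sqrt_less_iff real_less_lsqrt)
qed



lemma adj_sym: "adj \<omega> i k = adj \<omega> k i"
  by (simp add: adj_def min.commute max.commute)

lemma adj_idem: "adj \<omega> i k * adj \<omega> i k = adj \<omega> i k"
  by (simp add: adj_def)

lemma adj_mul_sym: "adj \<omega> i k * adj \<omega> k i = adj \<omega> i k"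
  by (simp add: adj_def min.commute max.commute)

lemma adj_range: "0 \<le> adj \<omega> i k \<and> adj \<omega> i k \<le> 1"
  by (simp add: adj_def)

lemma pop_sym: "pop P i k = pop P k i"
  by (simp add: pop_def min.commute max.commute)

lemma pop_range:
  assumes P_range: "\<And>i j. i < j \<Longrightarrow> j < n \<Longrightarrow> 0 \<le> P i j \<and> P i j \<le> 1"
    and "i < n" "k < n"
  shows "0 \<le> pop P i k \<and> pop P i k \<le> 1"
proof (cases "i = k")
  case False
  then have "min i k < max i k" "max i k < n" using assms(2,3) by (auto simp: min_def max_def)
  then show ?thesis using P_range False by (simp add: pop_def)
qed (simp add: pop_def)

lemma sq_helper:
  fixes e a b m :: real
  assumes "\<bar>e\<bar> \<le> (a + 2 * b) / m" "a \<ge> 0" "b \<ge> 0" "m > 0"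
  shows "e\<^sup>2 \<le> (2 * a\<^sup>2 + 8 * b\<^sup>2) / m\<^sup>2"
proof -
  have "e\<^sup>2 = \<bar>e\<bar>\<^sup>2" by simp
  also have "\<dots> \<le> ((a + 2 * b) / m)\<^sup>2"
    by (rule power_mono) (use assms in auto)
  also have "\<dots> = (a + 2 * b)\<^sup>2 / m\<^sup>2" by (simp add: power_divide)
  also have "\<dots> \<le> (2 * a\<^sup>2 + 8 * b\<^sup>2) / m\<^sup>2"
  proof (rule divide_right_mono)
    have "0 \<le> (a - 2 * b)\<^sup>2" by simp
    then show "(a + 2 * b)\<^sup>2 \<le> 2 * a\<^sup>2 + 8 * b\<^sup>2" by (simp add: power2_eq_square algebra_simps)
  qed simp
  finally show ?thesis .
qed

theorem lemmaA1:
  fixes n :: nat and P :: "nat \<Rightarrow> nat \<Rightarrow> real"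
  assumes P_range: "\<And>i j. i < j \<Longrightarrow> j < n \<Longrightarrow> 0 \<le> P i j \<and> P i j \<le> 1"
    and n_large: "sqrt (real n) / ln (real n) > 2"
  defines "\<tau> \<equiv> Min ((\<lambda>i. degree n (pop P) i / real n) ` {..<n})"
  shows "measure_pmf.prob (edge_pmf n P)
           {\<omega>. frob_norm n (\<lambda>i j. mat_mult n (norm_lap n (adj \<omega>)) (norm_lap n (adj \<omega>)) i j
                                  - mat_mult n (norm_lap n (pop P)) (norm_lap n (pop P)) i j)
                \<ge> 32 * sqrt 2 * ln (real n) / (\<tau>\<^sup>2 * sqrt (real n))}
         \<le> 4 * real n powr (2 - 2 * \<tau>\<^sup>2 * ln (real n))"
    (is "measure_pmf.prob _ ?E \<le> ?R")
proof -
  have lnpos: "ln (real n) > 0"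
  proof (rule ccontr)
    assume "\<not> ln (real n) > 0"
    then have "ln (real n) \<le> 0" by simp
    then have "sqrt (real n) / ln (real n) \<le> 0" by (simp add: divide_nonneg_nonpos)
    with n_large show False by simp
  qed
  have n2: "n \<ge> 2"
  proof (rule ccontr)
    assume "\<not> n \<ge> 2"
    then have "n = 0 \<or> n = 1" by auto
    with lnpos show False by auto
  qed
  have npos: "n > 0" using n2 by simp
  define \<epsilon> where "\<epsilon> = ln (real n) / sqrt (real n)"
  have sqn: "sqrt (real n) > 0" using npos by simp
  have eps_pos: "\<epsilon> > 0" using lnpos sqn by (simp add: \<epsilon>_def)
  have eps_half: "\<epsilon> \<le> 1/2"
  proof -
    have "2 * ln (real n) < sqrt (real n)" using n_large lnpos by (simp add: less_divide_eq)
    then show ?thesis using sqn by (simp add: \<epsilon>_def divide_simps)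
  qed
  have eps2: "\<epsilon>\<^sup>2 * real n = (ln (real n))\<^sup>2" using npos by (simp add: \<epsilon>_def power_divide)
  have lnh: "ln (real n) \<ge> 1/2" by (rule ln_ge_half[OF n2])
  define Dg where "Dg = degree n (pop P)"
  have popr: "\<And>i k. i < n \<Longrightarrow> k < n \<Longrightarrow> 0 \<le> pop P i k \<and> pop P i k \<le> 1"
    by (rule pop_range[OF P_range])
  have Dg0: "0 \<le> Dg i" if "i < n" for i
    unfolding Dg_def degree_def using popr[OF that] by (intro sum_nonneg) auto
  have Dgn: "Dg i \<le> real n" if "i < n" for i
  proof -
    have "Dg i \<le> (\<Sum>k<n. (1::real))" unfolding Dg_def degree_def
      using popr[OF that] by (intro sum_mono) auto
    then show ?thesis by simp
  qed
  have tau_le: "\<tau> \<le> Dg i / real n" if "i < n" for i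
    unfolding \<tau>_def Dg_def by (rule Min_le) (use that in auto)
  have "\<tau> \<in> (\<lambda>i. Dg i / real n) ` {..<n}"
    unfolding \<tau>_def Dg_def by (rule Min_in) (use npos in auto)
  then have tau_ge0: "\<tau> \<ge> 0" using Dg0 by auto
  have tau_le1: "\<tau> \<le> 1"
  proof -
    have h: "Dg 0 / real n \<le> 1" using Dgn[of 0] npos by simp
    show ?thesis using tau_le[of 0] npos h by linarith
  qed
  show ?thesis
  proof (cases "\<tau> = 0")
    case True
    have "measure_pmf.prob (edge_pmf n P) ?E \<le> 1" by simp
    also have "1 \<le> ?R"
    proof -
      have "real n powr 2 = (real n)\<^sup>2" using npos by (simp add: powr_numeral)
      moreover have "(1::real) \<le> (real n)\<^sup>2" using n2 by simp
      ultimately show ?thesis using True by simp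
    qed
    finally show ?thesis .
  next
    case False
    then have tau: "\<tau> > 0" using tau_ge0 by simp
    have DgL: "\<tau> * real n \<le> Dg i" if "i < n" for i
      using tau_le[OF that] npos by (simp add: le_divide_eq)
    have Dgpos: "Dg i > 0" if "i < n" for i
      using DgL[OF that] tau npos by (meson mult_pos_pos of_nat_0_less_iff order_less_le_trans)
    define c where "c = (\<lambda>k. if k < n then 1 / Dg k else 0)"
    have c: "0 \<le> c k \<and> c k \<le> 1 / (\<tau> * real n)" for k
    proof (cases "k < n")
      case True
      then show ?thesis using Dgpos[OF True] DgL[OF True] tau npos
        by (simp add: c_def frac_le)
    qed (use tau in \<open>simp add: c_def\<close>)
    define Deg where "Deg i = {\<omega>. \<bar>(\<Sum>k\<in>Sset n i i. 1 * (\<Prod>e\<in>Kset i i k. of_bool (\<omega> e)))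
          - (\<Sum>k\<in>Sset n i i. 1 * (\<Prod>e\<in>Kset i i k. P (fst e) (snd e)))\<bar> \<ge> \<tau> * real n * \<epsilon>}" for i
    define Cod where "Cod i j = {\<omega>. \<bar>(\<Sum>k\<in>Sset n i j. c k * (\<Prod>e\<in>Kset i j k. of_bool (\<omega> e)))
          - (\<Sum>k\<in>Sset n i j. c k * (\<Prod>e\<in>Kset i j k. P (fst e) (snd e)))\<bar> \<ge> \<epsilon>}" for i j
    define x where "x = exp (-2 * \<tau>\<^sup>2 * (ln (real n))\<^sup>2)"
    have pDeg: "measure_pmf.prob (edge_pmf n P) (Deg i) \<le> 2 * x" if i: "i < n" for i
    proof -
      have "measure_pmf.prob (edge_pmf n P) (Deg i) \<le> 2 * exp (-2 * (\<tau> * real n * \<epsilon>)\<^sup>2 / (real n * 1\<^sup>2))"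
        unfolding Deg_def by (rule hoeff[OF P_range i i]) (use tau npos eps_pos in auto)
      also have "-2 * (\<tau> * real n * \<epsilon>)\<^sup>2 / (real n * 1\<^sup>2) = -2 * \<tau>\<^sup>2 * (ln (real n))\<^sup>2"
      proof -
        have "(\<tau> * real n * \<epsilon>)\<^sup>2 / (real n * 1\<^sup>2) = \<tau>\<^sup>2 * (\<epsilon>\<^sup>2 * real n)"
          using npos by (simp add: power2_eq_square field_simps)
        then show ?thesis unfolding eps2 by simp
      qed
      finally show ?thesis by (simp add: x_def)
    qed
    have pCod: "measure_pmf.prob (edge_pmf n P) (Cod i j) \<le> 2 * x" if i: "i < n" and j: "j < n" for i j
    proof -
      have "measure_pmf.prob (edge_pmf n P) (Cod i j) \<le> 2 * exp (-2 * \<epsilon>\<^sup>2 / (real n * (1 / (\<tau> * real n))\<^sup>2))"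
        unfolding Cod_def by (rule hoeff[OF P_range i j]) (use tau npos eps_pos c in auto)
      also have "-2 * \<epsilon>\<^sup>2 / (real n * (1 / (\<tau> * real n))\<^sup>2) = -2 * \<tau>\<^sup>2 * (ln (real n))\<^sup>2"
      proof -
        have "\<epsilon>\<^sup>2 / (real n * (1 / (\<tau> * real n))\<^sup>2) = \<tau>\<^sup>2 * (\<epsilon>\<^sup>2 * real n)"
          using npos tau by (simp add: power2_eq_square field_simps)
        then show ?thesis unfolding eps2 by simp
      qed
      finally show ?thesis by (simp add: x_def)
    qed
    define U where "U = (\<Union>i\<in>{..<n}. Deg i) \<union> (\<Union>p\<in>{..<n}\<times>{..<n}. Cod (fst p) (snd p))"
    have sub: "?E \<subseteq> U"
    proof
      fix \<omega> assume \<omega>: "\<omega> \<in> ?E"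
      show "\<omega> \<in> U"
      proof (rule ccontr)
        assume nb: "\<omega> \<notin> U"
        have nDeg: "\<omega> \<notin> Deg i" if "i < n" for i using nb that by (auto simp: U_def)
        have nCod: "\<omega> \<notin> Cod i j" if "i < n" "j < n" for i j using nb that by (force simp: U_def)
        define dg where "dg = degree n (adj \<omega>)"
        have dg0: "0 \<le> dg k" for k unfolding dg_def degree_def using adj_range by (intro sum_nonneg) auto
        have dg_eq: "(\<Sum>k\<in>Sset n i i. 1 * (\<Prod>e\<in>Kset i i k. of_bool (\<omega> e))) = dg i" if i: "i < n" for i
        proof -
          have "(\<Sum>k\<in>Sset n i i. 1 * (\<Prod>e\<in>Kset i i k. of_bool (\<omega> e))) = (\<Sum>k\<in>Sset n i i. adj \<omega> i k)"
            by (intro sum.cong refl) (auto simp: Sset_def prodK_adj adj_mul_sym)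
          also have "\<dots> = dg i" unfolding dg_def degree_def
            by (rule sum_Sset[symmetric]) (use i in \<open>auto simp: adj_def\<close>)
          finally show ?thesis .
        qed
        have Dg_eq: "(\<Sum>k\<in>Sset n i i. 1 * (\<Prod>e\<in>Kset i i k. P (fst e) (snd e))) = Dg i" if i: "i < n" for i
        proof -
          have "(\<Sum>k\<in>Sset n i i. 1 * (\<Prod>e\<in>Kset i i k. P (fst e) (snd e))) = (\<Sum>k\<in>Sset n i i. pop P i k)"
            by (intro sum.cong refl) (auto simp: Sset_def prodK_pop)
          also have "\<dots> = Dg i" unfolding Dg_def degree_def
            by (rule sum_Sset[symmetric]) (use i in \<open>auto simp: pop_def\<close>)
          finally show ?thesis .
        qed
        have hdeg: "\<bar>dg i - Dg i\<bar> \<le> \<tau> * real n * \<epsilon>" if i: "i < n" for i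
          using nDeg[OF i] unfolding Deg_def mem_Collect_eq dg_eq[OF i] Dg_eq[OF i] by simp
        define r where "r = (\<lambda>i j k. if i = j then pop P i k else pop P i k * pop P k j)"
        have cod1: "(\<Sum>k\<in>Sset n i j. c k * (\<Prod>e\<in>Kset i j k. of_bool (\<omega> e)))
                    = (\<Sum>k<n. adj \<omega> i k * adj \<omega> k j / Dg k)" if i: "i < n" and j: "j < n" for i j
        proof -
          have "(\<Sum>k\<in>Sset n i j. c k * (\<Prod>e\<in>Kset i j k. of_bool (\<omega> e)))
              = (\<Sum>k\<in>Sset n i j. adj \<omega> i k * adj \<omega> k j / Dg k)"
            by (intro sum.cong refl) (auto simp: Sset_def prodK_adj c_def)
          also have "\<dots> = (\<Sum>k<n. adj \<omega> i k * adj \<omega> k j / Dg k)"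
            by (rule sum_Sset[symmetric]) (use i j in \<open>auto simp: adj_def\<close>)
          finally show ?thesis .
        qed
        have cod2: "(\<Sum>k\<in>Sset n i j. c k * (\<Prod>e\<in>Kset i j k. P (fst e) (snd e)))
                    = (\<Sum>k<n. r i j k / Dg k)" if i: "i < n" and j: "j < n" for i j
        proof -
          have "(\<Sum>k\<in>Sset n i j. c k * (\<Prod>e\<in>Kset i j k. P (fst e) (snd e)))
              = (\<Sum>k\<in>Sset n i j. r i j k / Dg k)"
            by (intro sum.cong refl) (auto simp: Sset_def prodK_pop c_def r_def)
          also have "\<dots> = (\<Sum>k<n. r i j k / Dg k)"
            by (rule sum_Sset[symmetric]) (use i j in \<open>auto simp: r_def pop_def\<close>)
          finally show ?thesis .
        qed
        have hcod: "\<bar>(\<Sum>k<n. adj \<omega> i k * adj \<omega> k j / Dg k) - (\<Sum>k<n. r i j k / Dg k)\<bar> \<le> \<epsilon>"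
          if i: "i < n" and j: "j < n" for i j
          using nCod[OF i j] unfolding Cod_def mem_Collect_eq cod1[OF i j] cod2[OF i j] by simp
        define Ed where "Ed = (\<lambda>i j. mat_mult n (norm_lap n (adj \<omega>)) (norm_lap n (adj \<omega>)) i j
                                  - mat_mult n (norm_lap n (pop P)) (norm_lap n (pop P)) i j)"
        have entry: "\<bar>Ed i j\<bar> \<le> (8 * \<epsilon> / \<tau> + 2 * (if i = j then 1 / \<tau> else 0)) / (\<tau> * real n)"
          if i: "i < n" and j: "j < n" for i j
        proof -
          have L1: "mat_mult n (norm_lap n (adj \<omega>)) (norm_lap n (adj \<omega>)) i j
              = (\<Sum>k<n. adj \<omega> i k * adj \<omega> k j / dg k) / (sqrt (dg i) * sqrt (dg j))"
            unfolding dg_def by (rule LL_formula) (use dg0 in \<open>simp add: dg_def\<close>)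
          have L2: "mat_mult n (norm_lap n (pop P)) (norm_lap n (pop P)) i j
              = (\<Sum>k<n. pop P i k * pop P k j / Dg k) / (sqrt (Dg i) * sqrt (Dg j))"
            unfolding Dg_def by (rule LL_formula) (use Dg0 in \<open>simp add: Dg_def\<close>)
          have h2: "\<bar>(\<Sum>k<n. r i j k / Dg k) - (\<Sum>k<n. pop P i k * pop P k j / Dg k)\<bar>
                    \<le> (if i = j then 1 / \<tau> else 0)"
          proof (cases "i = j")
            case True
            have "\<bar>(\<Sum>k<n. pop P i k / Dg k) - (\<Sum>k<n. pop P i k * pop P i k / Dg k)\<bar> \<le> 1 / \<tau>"
              by (rule diag_bias[OF tau npos]) (use popr[OF i] DgL in auto)
            then show ?thesis using True by (simp add: r_def pop_sym[of P _ j])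
          next
            case False
            then show ?thesis by (simp add: r_def)
          qed
          have "\<bar>(\<Sum>k<n. adj \<omega> i k * adj \<omega> k j / dg k) / (sqrt (dg i) * sqrt (dg j))
                - (\<Sum>k<n. pop P i k * pop P k j / Dg k) / (sqrt (Dg i) * sqrt (Dg j))\<bar>
                \<le> (8 * \<epsilon> / \<tau> + 2 * (if i = j then 1 / \<tau> else 0)) / (\<tau> * real n)"
          proof (rule entry_bound[where r = "r i j"])
            show "\<tau> > 0" "\<tau> \<le> 1" "\<epsilon> > 0" "\<epsilon> \<le> 1/2" "n > 0" "i < n" "j < n"
              using tau tau_le1 eps_pos eps_half npos i j by auto
            show "0 \<le> (if i = j then 1 / \<tau> else 0)" using tau by simp
            show "0 \<le> adj \<omega> i k * adj \<omega> k j \<and> adj \<omega> i k * adj \<omega> k j \<le> 1" for k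
              by (simp add: adj_def)
            show "0 \<le> pop P i k * pop P k j \<and> pop P i k * pop P k j \<le> 1" if "k < n" for k
              using popr[OF i that] popr[OF that j] by (auto intro: mult_le_one)
            show "\<tau> * real n \<le> Dg k" if "k < n" for k using DgL[OF that] .
            show "\<bar>dg k - Dg k\<bar> \<le> \<tau> * real n * \<epsilon>" if "k < n" for k using hdeg[OF that] .
            show "\<bar>(\<Sum>k<n. adj \<omega> i k * adj \<omega> k j / Dg k) - (\<Sum>k<n. r i j k / Dg k)\<bar> \<le> \<epsilon>"
              using hcod[OF i j] .
          qed (rule h2)
          then show ?thesis by (simp add: Ed_def L1 L2)
        qed
        have sq: "(Ed i j)\<^sup>2 \<le> 128 * \<epsilon>\<^sup>2 / (\<tau>^4 * (real n)\<^sup>2) + (if i = j then 8 / (\<tau>^4 * (real n)\<^sup>2) else 0)"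
          if i: "i < n" and j: "j < n" for i j
        proof -
          have "(Ed i j)\<^sup>2 \<le> (2 * (8 * \<epsilon> / \<tau>)\<^sup>2 + 8 * (if i = j then 1 / \<tau> else 0)\<^sup>2) / (\<tau> * real n)\<^sup>2"
            by (rule sq_helper[OF entry[OF i j]]) (use tau eps_pos npos in auto)
          also have "\<dots> = 128 * \<epsilon>\<^sup>2 / (\<tau>^4 * (real n)\<^sup>2) + (if i = j then 8 / (\<tau>^4 * (real n)\<^sup>2) else 0)"
            using tau npos by (cases "i = j") (simp_all add: field_simps power2_eq_square power4_eq_xxxx)
          finally show ?thesis .
        qed
        have "frob_norm n Ed < 32 * sqrt 2 * \<epsilon> / \<tau>\<^sup>2"
          by (rule frob_bound[OF tau npos eps_pos lnh eps2 sq])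
        moreover have "32 * sqrt 2 * \<epsilon> / \<tau>\<^sup>2 = 32 * sqrt 2 * ln (real n) / (\<tau>\<^sup>2 * sqrt (real n))"
          by (simp add: \<epsilon>_def)
        moreover have "frob_norm n Ed \<ge> 32 * sqrt 2 * ln (real n) / (\<tau>\<^sup>2 * sqrt (real n))"
          using \<omega> by (simp add: Ed_def)
        ultimately show False by linarith
      qed
    qed
    have "measure_pmf.prob (edge_pmf n P) ?E \<le> measure_pmf.prob (edge_pmf n P) U"
      by (rule measure_pmf.finite_measure_mono[OF sub]) simp
    also have "\<dots> \<le> measure_pmf.prob (edge_pmf n P) (\<Union>i\<in>{..<n}. Deg i)
                  + measure_pmf.prob (edge_pmf n P) (\<Union>p\<in>{..<n}\<times>{..<n}. Cod (fst p) (snd p))"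
      unfolding U_def by (rule measure_Un_le) simp_all
    also have "\<dots> \<le> (\<Sum>i\<in>{..<n}. measure_pmf.prob (edge_pmf n P) (Deg i))
                  + (\<Sum>p\<in>{..<n}\<times>{..<n}. measure_pmf.prob (edge_pmf n P) (Cod (fst p) (snd p)))"
      by (intro add_mono measure_pmf.finite_measure_subadditive_finite) auto
    also have "\<dots> \<le> (\<Sum>i\<in>{..<n}. 2 * x) + (\<Sum>p\<in>{..<n}\<times>{..<n}. 2 * x)"
      by (intro add_mono sum_mono) (auto intro: pDeg pCod)
    also have "\<dots> = 2 * real n * x + 2 * (real n)\<^sup>2 * x"
      by (simp add: card_cartesian_product power2_eq_square)
    also have "\<dots> \<le> 4 * (real n)\<^sup>2 * x"
    proof -
      have "real n \<le> (real n)\<^sup>2" using n2 by (simp add: power2_eq_square)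
      moreover have "x \<ge> 0" by (simp add: x_def)
      ultimately have "2 * real n * x \<le> 2 * (real n)\<^sup>2 * x" by (intro mult_right_mono) auto
      then show ?thesis by linarith
    qed
    also have "\<dots> = ?R"
    proof -
      have "real n powr (2 - 2 * \<tau>\<^sup>2 * ln (real n)) = exp ((2 - 2 * \<tau>\<^sup>2 * ln (real n)) * ln (real n))"
        using npos by (simp add: powr_def)
      also have "(2 - 2 * \<tau>\<^sup>2 * ln (real n)) * ln (real n) = 2 * ln (real n) + (-2 * \<tau>\<^sup>2 * (ln (real n))\<^sup>2)"
        by (simp add: algebra_simps power2_eq_square)
      also have "exp (2 * ln (real n) + (-2 * \<tau>\<^sup>2 * (ln (real n))\<^sup>2)) = exp (2 * ln (real n)) * x"
        unfolding x_def by (rule exp_add)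
      also have "exp (2 * ln (real n)) = exp (ln (real n)) * exp (ln (real n))"
        by (simp only: mult_2 exp_add)
      also have "\<dots> = (real n)\<^sup>2" using npos by (simp add: power2_eq_square)
      finally show ?thesis by simp
    qed
    finally show ?thesis .
  qed
qed


end
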